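(* Let $\alpha\in\mathbb R$, $\gamma\in\mathbb R\setminus\{0\}$, and let $K_0$ be the operator on $\ell^2(\mathbb Z)$ given by $(K_0f)(n)=\alpha f(n-1)+\alpha f(n+1)+\gamma n f(n)$. Let $\delta_n$ be the standard basis vector at $n$. Then for all $t\in\mathbb R$ and $x,n\in\mathbb Z$, $$\big[e^{-iK_0t}\delta_n\big](x)=J_{n-x}\!\Big(\tfrac{4\alpha}{\gamma}\sin\big(\tfrac{\gamma t}{2}\big)\Big)\exp\Big[-i\Big(\tfrac{\gamma t-\pi}{2}\,x+\tfrac{\gamma t+\pi}{2}\,n\Big)\Big],$$ where $J_k$ is the Bessel function of the first kind of integer order $k$.
   Context: $K_0$ is self-adjoint on the domain $\{f\in\ell^2(\mathbb Z):(nf(n))_n\in\ell^2(\mathbb Z)\}$. In the paper, $K_0$ is the infinite-volume matrix of $P(0)VP(0)$ for a uniform field $\vec B$ in the ground-state basis $|n,U\rangle$. Here $\alpha=\sqrt{B_1^2+B_2^2}\,a$, with $a$ the constant from the magnetization-profile lemma, and $\gamma=B_3$. *)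

theory Defs
  imports "HOL-Analysis.Analysis"
begin

type_synonym seqZ = "int \<Rightarrow> complex"

definition ell2Z :: "seqZ set" where
  "ell2Z = {f. (\<lambda>n. (cmod (f n))\<^sup>2) summable_on UNIV}"

definition l2norm :: "seqZ \<Rightarrow> real" where
  "l2norm f = sqrt (\<Sum>\<^sub>\<infinity>n. (cmod (f n))\<^sup>2)"

definition delta :: "int \<Rightarrow> seqZ" where
  "delta n = (\<lambda>x. if x = n then 1 else 0)"

text \<open>The operator K0 (acting pointwise) and its self-adjointness domain.\<close>
definition K0 :: "real \<Rightarrow> real \<Rightarrow> seqZ \<Rightarrow> seqZ" where
  "K0 \<alpha> \<gamma> f = (\<lambda>n. complex_of_real \<alpha> * f (n - 1) + complex_of_real \<alpha> * f (n + 1)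
                      + complex_of_real (\<gamma> * real_of_int n) * f n)"

definition domK0 :: "seqZ set" where
  "domK0 = {f \<in> ell2Z. (\<lambda>n. of_int n * f n) \<in> ell2Z}"

text \<open>U is the strongly continuous one-parameter unitary group on l2(Z) whose
  generator is -i K0 with domain domK0, i.e. U t = exp(-i K0 t) (Stone's theorem).\<close>
definition is_unitary_group_of_K0 :: "real \<Rightarrow> real \<Rightarrow> (real \<Rightarrow> seqZ \<Rightarrow> seqZ) \<Rightarrow> bool" where
  "is_unitary_group_of_K0 \<alpha> \<gamma> U \<longleftrightarrow>
     (\<forall>t. U t ` ell2Z = ell2Z) \<and>
     (\<forall>t. \<forall>f\<in>ell2Z. \<forall>g\<in>ell2Z. \<forall>a b. U t (\<lambda>n. a * f n + b * g n) = (\<lambda>n. a * U t f n + b * U t g n)) \<and>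
     (\<forall>t. \<forall>f\<in>ell2Z. l2norm (U t f) = l2norm f) \<and>
     (\<forall>f\<in>ell2Z. U 0 f = f) \<and>
     (\<forall>s t. \<forall>f\<in>ell2Z. U (s + t) f = U s (U t f)) \<and>
     (\<forall>f\<in>ell2Z. ((\<lambda>h. l2norm (U h f - f)) \<longlongrightarrow> 0) (at 0)) \<and>
     (\<forall>f\<in>ell2Z. \<forall>g\<in>ell2Z.
        ((\<lambda>h. l2norm ((\<lambda>n. (U h f n - f n) / complex_of_real h) - g)) \<longlongrightarrow> 0) (at 0)
        \<longleftrightarrow> (f \<in> domK0 \<and> g = (\<lambda>n. - \<i> * K0 \<alpha> \<gamma> f n)))"

definition besselJ :: "int \<Rightarrow> real \<Rightarrow> real" where
  "besselJ k z =
     (let m = nat \<bar>k\<bar>;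
          Jm = (\<Sum>j. (-1) ^ j / (fact j * fact (j + m)) * (z / 2) ^ (2 * j + m))
      in if k \<ge> 0 then Jm else (-1) ^ m * Jm)"

end

theory Submission
  imports Defs
begin


definition gc :: "nat \<Rightarrow> nat \<Rightarrow> real" where
  "gc m j = (-1)^j / (fact j * fact (j+m))"

definition gB :: "nat \<Rightarrow> real \<Rightarrow> real" where
  "gB m w = (\<Sum>j. gc m j * w^j)"

lemma gc_abs: "\<bar>gc m j\<bar> \<le> inverse (fact j * fact m)"
proof -
  have "fact m \<le> (fact (j+m) :: real)" by (rule fact_mono) simp
  then have "inverse (fact j * fact (j+m)) \<le> (inverse (fact j * fact m) :: real)"
    by (intro le_imp_inverse_le mult_left_mono) auto
  then show ?thesis unfolding gc_def by (simp add: abs_mult power_abs divide_inverse)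
qed

lemma gc_abs1: "\<bar>gc m j\<bar> \<le> inverse (fact j)"
proof -
  have "inverse (fact j * fact m) \<le> (inverse (fact j) :: real)"
    by (intro le_imp_inverse_le) (auto intro: mult_le_cancel_left1[THEN iffD2])
  with gc_abs[of m j] show ?thesis by linarith
qed

lemma summable_gc: "summable (\<lambda>j. gc m j * w^j)"
proof (rule summable_comparison_test[OF _ summable_exp[of "\<bar>w\<bar>"]])
  show "\<exists>N. \<forall>n\<ge>N. norm (gc m n * w ^ n) \<le> inverse (fact n) * \<bar>w\<bar> ^ n"
    using gc_abs1 by (auto simp: abs_mult power_abs intro!: mult_right_mono)
qed

lemma gB_bound: "\<bar>gB m w\<bar> \<le> exp \<bar>w\<bar> / fact m"
proof -
  have s: "summable (\<lambda>j. inverse (fact j) * \<bar>w\<bar>^j)" by (rule summable_exp)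
  have e: "exp \<bar>w\<bar> = (\<Sum>j. inverse (fact j) * \<bar>w\<bar>^j)"
    using exp_converges[of "\<bar>w\<bar>"] by (simp add: sums_iff scaleR_conv_of_real divide_inverse mult.commute)
  have "norm (gB m w) \<le> (\<Sum>j. inverse (fact j) * \<bar>w\<bar>^j / fact m)"
    unfolding gB_def
  proof (rule norm_suminf_le)
    show "summable (\<lambda>j. inverse (fact j) * \<bar>w\<bar>^j / fact m)" using s by (rule summable_divide)
    fix j
    have "\<bar>gc m j\<bar> * \<bar>w\<bar>^j \<le> inverse (fact j * fact m) * \<bar>w\<bar>^j"
      by (rule mult_right_mono[OF gc_abs]) simp
    then show "norm (gc m j * w ^ j) \<le> inverse (fact j) * \<bar>w\<bar> ^ j / fact m"
      by (simp add: abs_mult power_abs divide_inverse mult_ac)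
  qed
  also have "\<dots> = exp \<bar>w\<bar> / fact m" using e suminf_divide[OF s] by simp
  finally show ?thesis by simp
qed

lemma gc_Suc: "gc m (Suc n) = - gc (Suc m) n / of_nat (Suc n)"
proof -
  have f: "fact (Suc n) = (of_nat (Suc n) * fact n :: real)" by (rule fact_Suc)
  have e: "Suc n + m = n + Suc m" by simp
  show ?thesis unfolding gc_def e f by (simp del: fact_Suc of_nat_Suc add: field_simps)
qed

lemma gc_up: "gc m j = of_nat (j + Suc m) * gc (Suc m) j"
proof -
  have f: "fact (j + Suc m) = (of_nat (j + Suc m) * fact (j + m) :: real)"
    using fact_Suc[of "j+m"] by simp
  show ?thesis unfolding gc_def f by (simp del: fact_Suc of_nat_Suc add: field_simps)
qed

lemma diffs_gc: "diffs (gc m) = (\<lambda>n. - gc (Suc m) n)"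
  by (rule ext) (simp add: diffs_def gc_Suc del: of_nat_Suc)

lemma gB_deriv: "(gB m has_real_derivative - gB (Suc m) w) (at w)"
proof -
  have "((\<lambda>x. \<Sum>n. gc m n * x^n) has_real_derivative (\<Sum>n. diffs (gc m) n * w^n)) (at w)"
    by (rule termdiffs_strong_converges_everywhere) (rule summable_gc)
  also have "(\<Sum>n. diffs (gc m) n * w^n) = - gB (Suc m) w"
    unfolding diffs_gc gB_def using suminf_minus[OF summable_gc[of "Suc m" w]] by simp
  finally show ?thesis unfolding gB_def .
qed

lemma gB_rec: "gB m w = of_nat (Suc m) * gB (Suc m) w - w * gB (Suc (Suc m)) w"
proof -
  have a: "(\<lambda>j. of_nat (Suc m) * (gc (Suc m) j * w^j)) sums (of_nat (Suc m) * gB (Suc m) w)"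
    unfolding gB_def by (intro sums_mult summable_sums summable_gc)
  have "(\<lambda>n. of_nat (Suc n) * gc (Suc m) (Suc n) * w^(Suc n)) sums (- w * gB (Suc (Suc m)) w)"
  proof -
    have "(\<lambda>n. - w * (gc (Suc (Suc m)) n * w^n)) sums (- w * gB (Suc (Suc m)) w)"
      unfolding gB_def by (intro sums_mult summable_sums summable_gc)
    moreover have "of_nat (Suc n) * gc (Suc m) (Suc n) * w^(Suc n) = - w * (gc (Suc (Suc m)) n * w^n)" for n
      by (simp add: gc_Suc del: of_nat_Suc)
    ultimately show ?thesis by simp
  qed
  then have b: "(\<lambda>j. of_nat j * gc (Suc m) j * w^j) sums (- w * gB (Suc (Suc m)) w)"
    using sums_Suc_iff[of "\<lambda>j. of_nat j * gc (Suc m) j * w^j" "- w * gB (Suc (Suc m)) w"] by simp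
  have "(\<lambda>j. of_nat (Suc m) * (gc (Suc m) j * w^j) + of_nat j * gc (Suc m) j * w^j) sums
        (of_nat (Suc m) * gB (Suc m) w + - w * gB (Suc (Suc m)) w)"
    by (rule sums_add[OF a b])
  moreover have "of_nat (Suc m) * (gc (Suc m) j * w^j) + of_nat j * gc (Suc m) j * w^j = gc m j * w^j" for j
    by (subst gc_up[of m j]) (simp add: algebra_simps)
  ultimately have "(\<lambda>j. gc m j * w^j) sums (of_nat (Suc m) * gB (Suc m) w + - w * gB (Suc (Suc m)) w)"
    by simp
  then show ?thesis unfolding gB_def by (simp add: sums_iff)
qed

definition Jn :: "nat \<Rightarrow> real \<Rightarrow> real" where
  "Jn m z = (z/2)^m * gB m ((z/2)^2)"

definition Jn' :: "nat \<Rightarrow> real \<Rightarrow> real" where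
  "Jn' m z = of_nat m / 2 * (z/2)^(m-1) * gB m ((z/2)^2) - (z/2)^(Suc m) * gB (Suc m) ((z/2)^2)"

lemma Jn_deriv: "(Jn m has_real_derivative Jn' m z) (at z)"
proof -
  have d1: "((\<lambda>z. (z/2)^m) has_real_derivative (of_nat m * (z/2)^(m-1) * (1/2))) (at z)"
    by (auto intro!: derivative_eq_intros)
  have d2: "((\<lambda>z. gB m ((z/2)^2)) has_real_derivative (- gB (Suc m) ((z/2)^2) * (z/2))) (at z)"
    by (rule DERIV_chain2[OF gB_deriv, THEN DERIV_cong]) (auto intro!: derivative_eq_intros)
  have "((\<lambda>z. (z/2)^m * gB m ((z/2)^2)) has_real_derivative
      (of_nat m * (z/2)^(m-1) * (1/2)) * gB m ((z/2)^2) + (z/2)^m * (- gB (Suc m) ((z/2)^2) * (z/2))) (at z)"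
    by (rule DERIV_mult[OF d1 d2, THEN DERIV_cong]) (simp add: algebra_simps)
  moreover have "Jn m = (\<lambda>z. (z/2)^m * gB m ((z/2)^2))" by (rule ext) (simp add: Jn_def)
  ultimately have "(Jn m has_real_derivative (of_nat m * (z/2)^(m-1) * (1/2)) * gB m ((z/2)^2) + (z/2)^m * (- gB (Suc m) ((z/2)^2) * (z/2))) (at z)"
    by simp
  then show ?thesis
    by (rule DERIV_cong) (simp add: Jn'_def algebra_simps power_Suc2)
qed

lemma Jn'_Suc: "2 * Jn' (Suc p) z = Jn p z - Jn (Suc (Suc p)) z"
  unfolding Jn'_def Jn_def gB_rec[of p] by (simp add: algebra_simps power2_eq_square)

lemma Jn'_0: "Jn' 0 z = - Jn 1 z"
  unfolding Jn'_def Jn_def by simp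

lemma Jn_rec: "z * (Jn p z + Jn (Suc (Suc p)) z) = 2 * of_nat (Suc p) * Jn (Suc p) z"
  unfolding Jn_def gB_rec[of p] by (simp add: algebra_simps power2_eq_square)

lemma Jn_bound: "\<bar>Jn m z\<bar> \<le> (\<bar>z\<bar>/2)^m / fact m * exp ((z/2)^2)"
proof -
  have "\<bar>Jn m z\<bar> = (\<bar>z\<bar>/2)^m * \<bar>gB m ((z/2)^2)\<bar>"
    by (simp add: Jn_def abs_mult power_abs)
  also have "\<dots> \<le> (\<bar>z\<bar>/2)^m * (exp ((z/2)^2) / fact m)"
    using gB_bound[of m "(z/2)^2"] by (intro mult_left_mono) auto
  finally show ?thesis by simp
qed

lemma Jn_zero: "Jn m 0 = (if m = 0 then 1 else 0)"
proof -
  have "gB m 0 = gc m 0" unfolding gB_def using powser_zero[of "gc m"] by simp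
  then show ?thesis by (simp add: Jn_def gc_def)
qed


definition Jz :: "int \<Rightarrow> real \<Rightarrow> real" where
  "Jz k z = (if 0 \<le> k then Jn (nat k) z else (-1)^(nat (-k)) * Jn (nat (-k)) z)"

lemma Jn_series: "(\<Sum>j. (-1)^j / (fact j * fact (j + m)) * (z/2)^(2*j+m)) = Jn m z"
proof -
  have "Jn m z = (\<Sum>j. (z/2)^m * (gc m j * ((z/2)^2)^j))"
    unfolding Jn_def gB_def by (rule suminf_mult[symmetric]) (rule summable_gc)
  also have "\<dots> = (\<Sum>j. (-1)^j / (fact j * fact (j + m)) * (z/2)^(2*j+m))"
    by (rule suminf_cong) (simp add: gc_def power_add power_mult[symmetric] mult.commute)
  finally show ?thesis by simp
qed

lemma besselJ_Jz: "besselJ k z = Jz k z"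
  unfolding besselJ_def Let_def Jz_def Jn_series by (cases "0 \<le> k") (auto simp: nat_abs_int_diff)

lemma Jz_pos: "Jz (int m) z = Jn m z"
  by (simp add: Jz_def)

lemma Jz_neg: "Jz (- int m) z = (-1)^m * Jn m z"
  by (cases "m = 0") (simp_all add: Jz_def)

lemma Jz_cases:
  obtains (pos) p where "k = int (Suc p)" | (zero) "k = 0" | (neg) p where "k = - int (Suc p)"
proof (cases "k > 0")
  case True then show ?thesis using pos[of "nat (k - 1)"] by simp
next
  case False
  show ?thesis
  proof (cases "k = 0")
    case True then show ?thesis using zero by simp
  next
    case False2: False
    then show ?thesis using neg[of "nat (- k - 1)"] False by simp
  qed
qed

lemma Jz_deriv: "(Jz k has_real_derivative (Jz (k-1) z - Jz (k+1) z)/2) (at z)"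
proof (cases k rule: Jz_cases)
  case (pos p)
  have e: "Jz k = Jn (Suc p)" by (rule ext) (simp only: pos Jz_pos)
  have "k - 1 = int p" "k + 1 = int (Suc (Suc p))" using pos by simp_all
  then have h: "Jz (k-1) z = Jn p z" "Jz (k+1) z = Jn (Suc (Suc p)) z" by (simp_all only: Jz_pos)
  show ?thesis unfolding e h using Jn_deriv[of "Suc p" z] Jn'_Suc[of p z]
    by (auto elim!: DERIV_cong)
next
  case zero
  have e: "Jz k = Jn 0" by (rule ext) (simp add: zero Jz_def)
  have "Jz (k - 1) z = - Jn 1 z" "Jz (k+1) z = Jn 1 z" using zero Jz_neg[of 1 z] Jz_pos[of 1 z] by simp_all
  then show ?thesis unfolding e using Jn_deriv[of 0 z] Jn'_0[of z]
    by (auto elim!: DERIV_cong)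
next
  case (neg p)
  have e: "Jz k = (\<lambda>z. (-1)^(Suc p) * Jn (Suc p) z)" by (rule ext) (simp only: neg Jz_neg)
  have "k - 1 = - int (Suc (Suc p))" "k + 1 = - int p" using neg by simp_all
  then have "(Jz (k-1) z - Jz (k+1) z)/2 = (-1)^(Suc p) * Jn' (Suc p) z"
  proof -
    have r2: "(-1)^p * (2 * Jn' (Suc p) z) = (-1)^p * (Jn p z - Jn (Suc (Suc p)) z)"
      using Jn'_Suc[of p z] by simp
    show ?thesis using \<open>k - 1 = _\<close> \<open>k + 1 = _\<close> r2 by (simp only: Jz_neg) (simp add: algebra_simps)
  qed
  then show ?thesis unfolding e using DERIV_cmult[OF Jn_deriv[of "Suc p" z], of "(-1)^(Suc p)"]
    by simp
qed

lemma Jz_rec: "z * (Jz (k-1) z + Jz (k+1) z) = 2 * of_int k * Jz k z"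
proof (cases k rule: Jz_cases)
  case (pos p)
  have "k - 1 = int p" "k + 1 = int (Suc (Suc p))" using pos by simp_all
  then show ?thesis using Jn_rec[of z p] pos by (simp only: Jz_pos)
next
  case zero
  then show ?thesis using Jz_neg[of 1 z] Jz_pos[of 1 z] by simp
next
  case (neg p)
  have "k - 1 = - int (Suc (Suc p))" "k + 1 = - int p" using neg by simp_all
  then have h: "Jz (k-1) z = (-1)^(Suc (Suc p)) * Jn (Suc (Suc p)) z" "Jz (k+1) z = (-1)^p * Jn p z"
    "Jz k z = (-1)^(Suc p) * Jn (Suc p) z" using neg by (simp_all only: Jz_neg)
  have r: "(-1)^p * (z * (Jn p z + Jn (Suc (Suc p)) z)) = (-1)^p * (2 * of_nat (Suc p) * Jn (Suc p) z)"
    using Jn_rec[of z p] by simp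
  have kk: "real_of_int k = - 1 - real p" using neg by simp
  show ?thesis using r by (simp only: h kk) (simp add: algebra_simps)
qed

lemma Jz_bound: "\<bar>Jz k z\<bar> \<le> (\<bar>z\<bar>/2)^(nat \<bar>k\<bar>) / fact (nat \<bar>k\<bar>) * exp ((z/2)^2)"
  using Jn_bound[of "nat \<bar>k\<bar>" z] by (cases "0 \<le> k") (auto simp: Jz_def abs_mult)

lemma Jz_zero: "Jz k 0 = (if k = 0 then 1 else 0)"
  by (auto simp: Jz_def Jn_zero)



definition zf :: "real \<Rightarrow> real \<Rightarrow> real \<Rightarrow> real" where
  "zf \<alpha> \<gamma> \<tau> = 4 * \<alpha> / \<gamma> * sin (\<gamma> * \<tau> / 2)"

definition Wk :: "real \<Rightarrow> real \<Rightarrow> real \<Rightarrow> int \<Rightarrow> int \<Rightarrow> complex" where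
  "Wk \<alpha> \<gamma> \<tau> x y = complex_of_real (Jz (y - x) (zf \<alpha> \<gamma> \<tau>)) *
     exp (- \<i> * complex_of_real ((\<gamma> * \<tau> - pi) / 2 * real_of_int x + (\<gamma> * \<tau> + pi) / 2 * real_of_int y))"

lemma exp_mi: "exp (- \<i> * complex_of_real r) = cis (- r)"
  by (simp add: cis_conv_exp)

lemma Wk_deriv:
  assumes "\<gamma> \<noteq> 0"
  shows "((\<lambda>\<tau>. Wk \<alpha> \<gamma> \<tau> x y) has_vector_derivative
     (- \<i> * (complex_of_real \<alpha> * Wk \<alpha> \<gamma> \<tau> x (y - 1) + complex_of_real \<alpha> * Wk \<alpha> \<gamma> \<tau> x (y + 1)
              + complex_of_real (\<gamma> * real_of_int y) * Wk \<alpha> \<gamma> \<tau> x y))) (at \<tau>)"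
proof -
  define k where "k = y - x"
  define \<rho> where "\<rho> = (\<lambda>\<tau>. (\<gamma> * \<tau> - pi) / 2 * real_of_int x + (\<gamma> * \<tau> + pi) / 2 * real_of_int y)"
  define \<rho>' where "\<rho>' = \<gamma> / 2 * real_of_int x + \<gamma> / 2 * real_of_int y"
  define z where "z = zf \<alpha> \<gamma> \<tau>"
  define c where "c = cos (\<gamma> * \<tau> / 2)"
  define s where "s = sin (\<gamma> * \<tau> / 2)"
  define E where "E = exp (- \<i> * complex_of_real (\<rho> \<tau>))"
  define Jm where "Jm = Jz (k - 1) z"
  define Jp where "Jp = Jz (k + 1) z"
  define J0 where "J0 = Jz k z"
  have dz: "(zf \<alpha> \<gamma> has_real_derivative 2 * \<alpha> * c) (at \<tau>)"
  proof -
    have "((\<lambda>\<tau>. 4 * \<alpha> / \<gamma> * sin (\<gamma> * \<tau> / 2)) has_real_derivative 4 * \<alpha> / \<gamma> * (cos (\<gamma> * \<tau> / 2) * (\<gamma> / 2))) (at \<tau>)"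
      by (intro DERIV_cmult DERIV_chain2[OF DERIV_sin]) (auto intro!: derivative_eq_intros)
    then show ?thesis unfolding zf_def[abs_def] c_def
      by (rule DERIV_cong) (use assms in \<open>simp add: field_simps\<close>)
  qed
  have dJ: "((\<lambda>\<tau>. Jz k (zf \<alpha> \<gamma> \<tau>)) has_real_derivative ((Jm - Jp) / 2 * (2 * \<alpha> * c))) (at \<tau>)"
    unfolding Jm_def Jp_def z_def by (rule DERIV_chain2[OF Jz_deriv dz])
  have dr: "((\<lambda>\<tau>. - \<i> * complex_of_real (\<rho> \<tau>)) has_vector_derivative (- \<i> * complex_of_real \<rho>')) (at \<tau>)"
  proof -
    have "(\<rho> has_real_derivative \<rho>') (at \<tau>)" unfolding \<rho>_def[abs_def] \<rho>'_def
      by (auto intro!: derivative_eq_intros simp: field_simps)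
    then show ?thesis by (intro has_vector_derivative_mult_right has_vector_derivative_of_real)
  qed
  have dE: "((\<lambda>\<tau>. exp (- \<i> * complex_of_real (\<rho> \<tau>))) has_vector_derivative (- \<i> * complex_of_real \<rho>') * E) (at \<tau>)"
    using field_vector_diff_chain_at[OF dr DERIV_exp] by (simp add: o_def E_def)
  have W: "(\<lambda>\<tau>. Wk \<alpha> \<gamma> \<tau> x y) = (\<lambda>\<tau>. complex_of_real (Jz k (zf \<alpha> \<gamma> \<tau>)) * exp (- \<i> * complex_of_real (\<rho> \<tau>)))"
    by (simp add: Wk_def k_def \<rho>_def fun_eq_iff)
  have D: "((\<lambda>\<tau>. Wk \<alpha> \<gamma> \<tau> x y) has_vector_derivative
      (complex_of_real J0 * ((- \<i> * complex_of_real \<rho>') * E) + complex_of_real ((Jm - Jp) / 2 * (2 * \<alpha> * c)) * E)) (at \<tau>)"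
    unfolding W using has_vector_derivative_mult[OF has_vector_derivative_of_real[OF dJ] dE]
    by (simp add: J0_def z_def E_def)
  have cos_s: "cos ((\<gamma> * \<tau> + pi) / 2) = - s" "sin ((\<gamma> * \<tau> + pi) / 2) = c"
    unfolding s_def c_def by (simp_all add: add_divide_distrib cos_add sin_add)
  have Wm: "Wk \<alpha> \<gamma> \<tau> x (y - 1) = complex_of_real Jm * E * Complex (- s) c"
  proof -
    have "exp (- \<i> * complex_of_real ((\<gamma> * \<tau> - pi) / 2 * real_of_int x + (\<gamma> * \<tau> + pi) / 2 * real_of_int (y - 1)))
        = E * cis ((\<gamma> * \<tau> + pi) / 2)"
      unfolding E_def exp_mi cis_mult \<rho>_def by (rule arg_cong[where f=cis]) (simp add: field_simps)
    also have "cis ((\<gamma> * \<tau> + pi) / 2) = Complex (- s) c" using cos_s by (simp add: cis.ctr)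
    finally show ?thesis by (simp add: Wk_def Jm_def k_def z_def algebra_simps)
  qed
  have Wp: "Wk \<alpha> \<gamma> \<tau> x (y + 1) = complex_of_real Jp * E * Complex (- s) (- c)"
  proof -
    have "exp (- \<i> * complex_of_real ((\<gamma> * \<tau> - pi) / 2 * real_of_int x + (\<gamma> * \<tau> + pi) / 2 * real_of_int (y + 1)))
        = E * cis (- ((\<gamma> * \<tau> + pi) / 2))"
      unfolding E_def exp_mi cis_mult \<rho>_def by (rule arg_cong[where f=cis]) (simp add: field_simps)
    also have "cis (- ((\<gamma> * \<tau> + pi) / 2)) = Complex (- s) (- c)" using cos_s by (simp add: cis.ctr)
    finally show ?thesis by (simp add: Wk_def Jp_def k_def z_def algebra_simps)
  qed
  have W0: "Wk \<alpha> \<gamma> \<tau> x y = complex_of_real J0 * E"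
    by (simp add: Wk_def J0_def k_def z_def E_def \<rho>_def)
  have rec: "\<alpha> * s * (Jm + Jp) = \<gamma> * real_of_int k / 2 * J0"
  proof -
    have "z * (Jm + Jp) = 2 * real_of_int k * J0" unfolding Jm_def Jp_def J0_def by (rule Jz_rec)
    then have "\<gamma> / 4 * (z * (Jm + Jp)) = \<gamma> / 4 * (2 * real_of_int k * J0)" by simp
    moreover have "\<gamma> / 4 * z = \<alpha> * s" using assms by (simp add: z_def zf_def s_def)
    ultimately show ?thesis by (simp add: algebra_simps)
  qed
  define A where "A = complex_of_real J0 * (- \<i> * complex_of_real \<rho>') + complex_of_real ((Jm - Jp) / 2 * (2 * \<alpha> * c))"
  define B where "B = - \<i> * (complex_of_real \<alpha> * (complex_of_real Jm * Complex (- s) c)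
       + complex_of_real \<alpha> * (complex_of_real Jp * Complex (- s) (- c)) + complex_of_real (\<gamma> * real_of_int y) * complex_of_real J0)"
  have AB: "A = B"
  proof (rule complex_eqI)
    show "Re A = Re B" by (simp add: A_def B_def field_simps)
    show "Im A = Im B" using rec by (simp add: A_def B_def \<rho>'_def k_def algebra_simps)
  qed
  have "complex_of_real J0 * ((- \<i> * complex_of_real \<rho>') * E) + complex_of_real ((Jm - Jp) / 2 * (2 * \<alpha> * c)) * E = E * A"
    by (simp add: A_def algebra_simps)
  also have "\<dots> = E * B" by (simp add: AB)
  also have "\<dots> = - \<i> * (complex_of_real \<alpha> * Wk \<alpha> \<gamma> \<tau> x (y - 1) + complex_of_real \<alpha> * Wk \<alpha> \<gamma> \<tau> x (y + 1)
              + complex_of_real (\<gamma> * real_of_int y) * Wk \<alpha> \<gamma> \<tau> x y)"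
    unfolding Wm Wp W0 B_def by (simp add: algebra_simps)
  finally show ?thesis using D by simp
qed



lemma sq_sum_le: "((u::real) + v)^2 \<le> 2 * u^2 + 2 * v^2"
proof -
  have "0 \<le> (u - v)^2" by simp
  then show ?thesis by (simp add: power2_eq_square algebra_simps)
qed

lemma ell2Z_lin:
  assumes "f \<in> ell2Z" "g \<in> ell2Z"
  shows "(\<lambda>n. a * f n + b * g n) \<in> ell2Z"
proof -
  have sf: "(\<lambda>n. (cmod (f n))\<^sup>2) summable_on UNIV" and sg: "(\<lambda>n. (cmod (g n))\<^sup>2) summable_on UNIV"
    using assms by (auto simp: ell2Z_def)
  have s: "(\<lambda>n. 2 * (cmod a)^2 * (cmod (f n))\<^sup>2 + 2 * (cmod b)^2 * (cmod (g n))\<^sup>2) summable_on UNIV"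
    by (intro summable_on_add summable_on_cmult_right sf sg)
  have "(\<lambda>n. (cmod (a * f n + b * g n))\<^sup>2) summable_on UNIV"
  proof (rule summable_on_comparison_test[OF s])
    fix n :: int
    have "cmod (a * f n + b * g n) \<le> cmod a * cmod (f n) + cmod b * cmod (g n)"
      by (metis norm_mult norm_triangle_ineq)
    then have "(cmod (a * f n + b * g n))\<^sup>2 \<le> (cmod a * cmod (f n) + cmod b * cmod (g n))\<^sup>2"
      by (intro power_mono) auto
    also have "\<dots> \<le> 2 * (cmod a * cmod (f n))^2 + 2 * (cmod b * cmod (g n))^2" by (rule sq_sum_le)
    finally show "(cmod (a * f n + b * g n))\<^sup>2 \<le> 2 * (cmod a)^2 * (cmod (f n))\<^sup>2 + 2 * (cmod b)^2 * (cmod (g n))\<^sup>2"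
      by (simp add: power_mult_distrib)
  qed simp
  then show ?thesis by (simp add: ell2Z_def)
qed

lemma ell2Z_fin:
  assumes "finite {n. f n \<noteq> 0}"
  shows "f \<in> ell2Z"
proof -
  have "(\<lambda>n. (cmod (f n))\<^sup>2) summable_on {n. f n \<noteq> 0}" using assms by simp
  moreover have "(\<lambda>n. (cmod (f n))\<^sup>2) summable_on {n. f n \<noteq> 0} \<longleftrightarrow> (\<lambda>n. (cmod (f n))\<^sup>2) summable_on UNIV"
    by (rule summable_on_cong_neutral) auto
  ultimately show ?thesis by (simp add: ell2Z_def)
qed

lemma ell2Z_pt:
  assumes "f \<in> ell2Z"
  shows "cmod (f y) \<le> l2norm f"
proof -
  have "(cmod (f y))\<^sup>2 = infsum (\<lambda>n. (cmod (f n))\<^sup>2) {y}" by simp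
  also have "\<dots> \<le> infsum (\<lambda>n. (cmod (f n))\<^sup>2) UNIV"
    by (rule infsum_mono_neutral) (use assms in \<open>auto simp: ell2Z_def\<close>)
  finally show ?thesis unfolding l2norm_def by (rule real_le_rsqrt)
qed

lemma delta_ell2: "delta n \<in> ell2Z"
  by (rule ell2Z_fin) (rule finite_subset[of _ "{n}"], auto simp: delta_def)

lemma delta_dom: "delta n \<in> domK0"
proof -
  have "(\<lambda>k. of_int k * delta n k) \<in> ell2Z"
    by (rule ell2Z_fin) (rule finite_subset[of _ "{n}"], auto simp: delta_def)
  then show ?thesis using delta_ell2 by (simp add: domK0_def)
qed

lemma K0_delta_ell2: "(\<lambda>k. - \<i> * K0 \<alpha> \<gamma> (delta n) k) \<in> ell2Z"
  by (rule ell2Z_fin) (rule finite_subset[of _ "{n-1, n, n+1}"], auto simp: delta_def K0_def)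

lemma l2norm_delta: "l2norm (delta n) = 1"
proof -
  have "infsum (\<lambda>k. (cmod (delta n k))\<^sup>2) UNIV = infsum (\<lambda>k. (cmod (delta n k))\<^sup>2) {n}"
    by (rule infsum_cong_neutral) (auto simp: delta_def)
  then show ?thesis by (simp add: l2norm_def delta_def)
qed

lemma U_props:
  assumes H: "is_unitary_group_of_K0 \<alpha> \<gamma> U"
  shows U_ell2: "\<And>t f. f \<in> ell2Z \<Longrightarrow> U t f \<in> ell2Z"
    and U_lin: "\<And>t f g a b. f \<in> ell2Z \<Longrightarrow> g \<in> ell2Z \<Longrightarrow> U t (\<lambda>n. a * f n + b * g n) = (\<lambda>n. a * U t f n + b * U t g n)"
    and U_iso: "\<And>t f. f \<in> ell2Z \<Longrightarrow> l2norm (U t f) = l2norm f"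
    and U_0: "\<And>f. f \<in> ell2Z \<Longrightarrow> U 0 f = f"
    and U_grp: "\<And>s t f. f \<in> ell2Z \<Longrightarrow> U (s + t) f = U s (U t f)"
    and U_gen: "\<And>f g. f \<in> ell2Z \<Longrightarrow> g \<in> ell2Z \<Longrightarrow>
        ((\<lambda>h. l2norm ((\<lambda>n. (U h f n - f n) / complex_of_real h) - g)) \<longlongrightarrow> 0) (at 0)
        \<longleftrightarrow> (f \<in> domK0 \<and> g = (\<lambda>n. - \<i> * K0 \<alpha> \<gamma> f n))"
  using H unfolding is_unitary_group_of_K0_def by blast+

lemma U_deriv:
  assumes H: "is_unitary_group_of_K0 \<alpha> \<gamma> U"
  shows "((\<lambda>s. U s (delta n) y) has_vector_derivative (- \<i> * K0 \<alpha> \<gamma> (U s (delta n)) y)) (at s)"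
proof -
  define \<delta> where "\<delta> = delta n"
  define g where "g = (\<lambda>k. - \<i> * K0 \<alpha> \<gamma> \<delta> k)"
  have d: "\<delta> \<in> ell2Z" "\<delta> \<in> domK0" unfolding \<delta>_def by (rule delta_ell2, rule delta_dom)
  have gl: "g \<in> ell2Z" unfolding g_def \<delta>_def by (rule K0_delta_ell2)
  have lim1: "((\<lambda>h. l2norm ((\<lambda>k. (U h \<delta> k - \<delta> k) / complex_of_real h) - g)) \<longlongrightarrow> 0) (at 0)"
    using U_gen[OF H d(1) gl] d(2) by (simp add: g_def)
  define f where "f = U s \<delta>"
  define G where "G = U s g"
  have fl: "f \<in> ell2Z" and Gl: "G \<in> ell2Z" unfolding f_def G_def using U_ell2[OF H] d gl by auto
  define Q where "Q = (\<lambda>h. (\<lambda>k. (U h f k - f k) / complex_of_real h))"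
  have key: "l2norm (Q h - G) = l2norm ((\<lambda>k. (U h \<delta> k - \<delta> k) / complex_of_real h) - g) \<and> Q h - G \<in> ell2Z" for h
  proof -
    define P where "P = (\<lambda>k. (1 / complex_of_real h) * U h \<delta> k + (- 1 / complex_of_real h) * \<delta> k)"
    have Ul: "U h \<delta> \<in> ell2Z" using U_ell2[OF H d(1)] .
    have Pl: "P \<in> ell2Z" unfolding P_def by (rule ell2Z_lin[OF Ul d(1)])
    have "U s P = (\<lambda>k. (1 / complex_of_real h) * U s (U h \<delta>) k + (- 1 / complex_of_real h) * U s \<delta> k)"
      unfolding P_def by (rule U_lin[OF H Ul d(1)])
    also have "U s (U h \<delta>) = U h f"
      unfolding f_def using U_grp[OF H d(1), of s h] U_grp[OF H d(1), of h s] by (simp add: add.commute)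
    finally have "U s P = (\<lambda>k. (1 / complex_of_real h) * U h f k + (- 1 / complex_of_real h) * f k)"
      unfolding f_def .
    then have UP: "U s P = Q h" unfolding Q_def by (simp add: fun_eq_iff diff_divide_distrib)
    define Dg where "Dg = (\<lambda>k. 1 * P k + (- 1) * g k)"
    have Dgl: "Dg \<in> ell2Z" unfolding Dg_def by (rule ell2Z_lin[OF Pl gl])
    have "U s Dg = (\<lambda>k. 1 * U s P k + (- 1) * U s g k)"
      unfolding Dg_def by (rule U_lin[OF H Pl gl])
    then have UD: "U s Dg = Q h - G" unfolding UP G_def by (simp add: fun_eq_iff)
    have "Dg = (\<lambda>k. (U h \<delta> k - \<delta> k) / complex_of_real h) - g"
      unfolding Dg_def P_def by (simp add: fun_eq_iff diff_divide_distrib)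
    then show ?thesis using U_iso[OF H Dgl, of s] U_ell2[OF H Dgl, of s] UD by simp
  qed
  have lim2: "((\<lambda>h. l2norm (Q h - G)) \<longlongrightarrow> 0) (at 0)" using lim1 key by simp
  then have "f \<in> domK0 \<and> G = (\<lambda>k. - \<i> * K0 \<alpha> \<gamma> f k)"
    using U_gen[OF H fl Gl] unfolding Q_def by simp
  then have GD: "G y = - \<i> * K0 \<alpha> \<gamma> (U s (delta n)) y" unfolding f_def \<delta>_def by simp
  have shift: "U (s + h) \<delta> y = U h f y" for h
    unfolding f_def using U_grp[OF H d(1), of h s] by (simp add: add.commute)
  have "((\<lambda>h. norm (U (s + h) \<delta> y - U s \<delta> y - h *\<^sub>R G y) / norm h) \<longlongrightarrow> 0) (at 0)"
  proof (rule tendsto_sandwich[OF _ _ tendsto_const lim2])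
    show "\<forall>\<^sub>F h in at 0. 0 \<le> norm (U (s + h) \<delta> y - U s \<delta> y - h *\<^sub>R G y) / norm h" by simp
    have "norm (U (s + h) \<delta> y - U s \<delta> y - h *\<^sub>R G y) / norm h \<le> l2norm (Q h - G)" if "h \<noteq> 0" for h
    proof -
      have "norm (U (s + h) \<delta> y - U s \<delta> y - h *\<^sub>R G y) / norm h = cmod ((Q h - G) y)"
      proof -
        have "(Q h - G) y = (U (s + h) \<delta> y - U s \<delta> y - h *\<^sub>R G y) / complex_of_real h"
          using that U_grp[OF H d(1), of h s] by (simp add: Q_def shift f_def scaleR_conv_of_real field_simps)
        then show ?thesis by (simp add: norm_divide)
      qed
      also have "\<dots> \<le> l2norm (Q h - G)" using key[of h] by (intro ell2Z_pt) blast
      finally show ?thesis .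
    qed
    then show "\<forall>\<^sub>F h in at 0. norm (U (s + h) \<delta> y - U s \<delta> y - h *\<^sub>R G y) / norm h \<le> l2norm (Q h - G)"
      by (auto simp: eventually_at_filter)
  qed
  then have "((\<lambda>s. U s \<delta> y) has_derivative (\<lambda>h. h *\<^sub>R G y)) (at s)"
    unfolding has_derivative_at by (auto intro: bounded_linear_scaleR_left)
  then show ?thesis unfolding has_vector_derivative_def GD[symmetric] \<delta>_def .
qed

lemma U_bound:
  assumes H: "is_unitary_group_of_K0 \<alpha> \<gamma> U"
  shows "cmod (U s (delta n) y) \<le> 1"
  using ell2Z_pt[OF U_ell2[OF H delta_ell2]] U_iso[OF H delta_ell2] l2norm_delta by metis

lemma U_zero:
  assumes H: "is_unitary_group_of_K0 \<alpha> \<gamma> U"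
  shows "U 0 (delta n) = delta n"
  using U_0[OF H delta_ell2] .



definition bet :: "real \<Rightarrow> nat \<Rightarrow> real" where
  "bet Z m = (Z/2)^m / fact m * exp ((Z/2)^2)"

lemma Wk_norm:
  assumes "\<gamma> \<noteq> 0"
  shows "cmod (Wk \<alpha> \<gamma> \<tau> x y) \<le> bet (4 * \<bar>\<alpha>\<bar> / \<bar>\<gamma>\<bar>) (nat \<bar>y - x\<bar>)"
proof -
  define Z where "Z = 4 * \<bar>\<alpha>\<bar> / \<bar>\<gamma>\<bar>"
  define z where "z = zf \<alpha> \<gamma> \<tau>"
  define m where "m = nat \<bar>y - x\<bar>"
  have zZ: "\<bar>z\<bar> \<le> Z"
  proof -
    have "\<bar>z\<bar> = 4 * \<bar>\<alpha>\<bar> / \<bar>\<gamma>\<bar> * \<bar>sin (\<gamma> * \<tau> / 2)\<bar>" by (simp add: z_def zf_def abs_mult)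
    also have "\<dots> \<le> 4 * \<bar>\<alpha>\<bar> / \<bar>\<gamma>\<bar> * 1" by (intro mult_left_mono) auto
    finally show ?thesis by (simp add: Z_def)
  qed
  have "cmod (Wk \<alpha> \<gamma> \<tau> x y) = \<bar>Jz (y - x) z\<bar>"
    by (simp add: Wk_def z_def norm_mult exp_mi)
  also have "\<dots> \<le> (\<bar>z\<bar>/2)^m / fact m * exp ((z/2)^2)" unfolding m_def by (rule Jz_bound)
  also have "\<dots> \<le> (Z/2)^m / fact m * exp ((Z/2)^2)"
  proof (intro mult_mono divide_right_mono power_mono)
    have "(z/2)^2 = (\<bar>z\<bar>/2)^2" by (simp add: power2_eq_square abs_mult_self)
    also have "\<dots> \<le> (Z/2)^2" using zZ by (intro power_mono) auto
    finally show "exp ((z/2)^2) \<le> exp ((Z/2)^2)" by simp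
  qed (use zZ in auto)
  finally show ?thesis by (simp add: bet_def Z_def m_def)
qed

lemma bet_lim: "(\<lambda>m. bet Z (m + k)) \<longlonglongrightarrow> 0"
proof -
  have "(\<lambda>m. inverse (fact m) * (Z/2)^m) \<longlonglongrightarrow> 0"
    by (rule summable_LIMSEQ_zero) (rule summable_exp)
  then have "(\<lambda>m. inverse (fact m) * (Z/2)^m * exp ((Z/2)^2)) \<longlonglongrightarrow> 0 * exp ((Z/2)^2)"
    by (rule tendsto_mult_right)
  then have "bet Z \<longlonglongrightarrow> 0" by (simp add: bet_def[abs_def] field_simps)
  then show ?thesis by (rule LIMSEQ_ignore_initial_segment)
qed

lemma Wk_zero: "Wk \<alpha> \<gamma> 0 x y = (if y = x then 1 else 0)"
proof -
  have "zf \<alpha> \<gamma> 0 = 0" by (simp add: zf_def)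
  then show ?thesis
    by (auto simp: Wk_def Jz_zero algebra_simps)
qed

lemma mvt_bound:
  fixes F :: "real \<Rightarrow> complex"
  assumes D: "\<And>s. (F has_vector_derivative F' s) (at s)"
    and B: "\<And>s. norm (F' s) \<le> M"
  shows "norm (F b - F a) \<le> M * \<bar>b - a\<bar>"
proof -
  have gen: "norm (F v - F u) \<le> M * (v - u)" if "u < v" for u v
  proof -
    have c: "continuous_on {u..v} F"
      using D by (intro continuous_on_vector_derivative) (auto intro: has_vector_derivative_at_within)
    have "norm (F v - F u) \<le> M * v - M * u"
      by (rule differentiable_bound_general[OF that c, where \<phi>="\<lambda>s. M * s" and \<phi>'="\<lambda>s. M" and f'=F'])
         (auto intro!: continuous_intros D B derivative_eq_intros)
    then show ?thesis by (simp add: algebra_simps)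
  qed
  show ?thesis
  proof (cases a b rule: linorder_cases)
    case less then show ?thesis using gen[of a b] by simp
  next
    case equal then show ?thesis by simp
  next
    case greater then show ?thesis using gen[of b a] by (simp add: norm_minus_commute)
  qed
qed

lemma tele:
  fixes Bf :: "int \<Rightarrow> complex"
  shows "(\<Sum>j<N. (Bf (x + int j) - Bf (x + int j + 1)) + (Bf (x - 1 - int j) - Bf (x - int j)))
       = Bf (x - int N) - Bf (x + int N)"
  by (induction N) (simp_all add: algebra_simps)



lemma sum_ind: "(\<Sum>j<N. if int j = m then w else 0) = (if 0 \<le> m \<and> m < int N then w else (0::complex))"
proof (cases "0 \<le> m")
  case True
  have "(\<Sum>j<N. if int j = m then w else 0) = (\<Sum>j<N. if j = nat m then w else 0)"
    by (rule sum.cong) (use True in auto)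
  then show ?thesis using True by auto
next
  case False
  have "(\<Sum>j<N. if int j = m then w else 0) = (\<Sum>j<N. (0::complex))"
    by (rule sum.cong) (use False in auto)
  then show ?thesis using False by simp
qed

theorem mainTheorem4:
  fixes \<alpha> \<gamma> t :: real and x n :: int and U :: "real \<Rightarrow> seqZ \<Rightarrow> seqZ"
  assumes "\<gamma> \<noteq> 0"
    and "is_unitary_group_of_K0 \<alpha> \<gamma> U"
  shows "U t (delta n) x =
     complex_of_real (besselJ (n - x) (4 * \<alpha> / \<gamma> * sin (\<gamma> * t / 2)))
     * exp (- \<i> * complex_of_real ((\<gamma> * t - pi) / 2 * real_of_int x + (\<gamma> * t + pi) / 2 * real_of_int n))"
proof -
  note H = assms(2)
  define \<delta> where "\<delta> = delta n"
  define c where "c = (\<lambda>y s. U s \<delta> y)"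
  define W where "W = (\<lambda>s y. Wk \<alpha> \<gamma> (t - s) x y)"
  define A where "A = (\<lambda>y s. W s y * c y s)"
  define Bf where "Bf = (\<lambda>s y. W s (y - 1) * c y s - W s y * c (y - 1) s)"
  define S where "S = (\<lambda>N s. \<Sum>j<N. A (x + int j) s + A (x - 1 - int j) s)"
  define Z where "Z = 4 * \<bar>\<alpha>\<bar> / \<bar>\<gamma>\<bar>"
  define M where "M = (\<lambda>N. \<bar>\<alpha>\<bar> * (bet Z (Suc N) + bet Z N + bet Z (N - 1) + bet Z N))"
  have dc: "(c y has_vector_derivative (- \<i> * (complex_of_real \<alpha> * c (y - 1) s + complex_of_real \<alpha> * c (y + 1) s
      + complex_of_real (\<gamma> * real_of_int y) * c y s))) (at s)" for y s
    using U_deriv[OF H, of n y s] by (simp add: c_def \<delta>_def K0_def)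
  have dW: "((\<lambda>s. W s y) has_vector_derivative (\<i> * (complex_of_real \<alpha> * W s (y - 1) + complex_of_real \<alpha> * W s (y + 1)
      + complex_of_real (\<gamma> * real_of_int y) * W s y))) (at s)" for y s
  proof -
    have f: "((\<lambda>s. t - s) has_vector_derivative - 1) (at s)"
      by (auto intro!: derivative_eq_intros)
    from vector_diff_chain_at[OF f Wk_deriv[OF assms(1), of \<alpha> x y "t - s"]]
    show ?thesis by (simp add: W_def o_def)
  qed
  have dA: "(A y has_vector_derivative (\<i> * complex_of_real \<alpha> * (Bf s y - Bf s (y + 1)))) (at s)" for y s
  proof -
    have "((\<lambda>s. W s y * c y s) has_vector_derivative
        (W s y * (- \<i> * (complex_of_real \<alpha> * c (y - 1) s + complex_of_real \<alpha> * c (y + 1) s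
           + complex_of_real (\<gamma> * real_of_int y) * c y s))
         + (\<i> * (complex_of_real \<alpha> * W s (y - 1) + complex_of_real \<alpha> * W s (y + 1)
           + complex_of_real (\<gamma> * real_of_int y) * W s y)) * c y s)) (at s)"
      by (rule has_vector_derivative_mult[OF dW dc])
    then show ?thesis unfolding A_def[abs_def]
      by (rule has_vector_derivative_eq_rhs) (simp add: Bf_def algebra_simps)
  qed
  have dS: "(S N has_vector_derivative (\<i> * complex_of_real \<alpha> * (Bf s (x - int N) - Bf s (x + int N)))) (at s)" for N s
  proof -
    have "(S N has_vector_derivative (\<Sum>j<N. \<i> * complex_of_real \<alpha> * (Bf s (x + int j) - Bf s (x + int j + 1))
        + \<i> * complex_of_real \<alpha> * (Bf s (x - 1 - int j) - Bf s (x - 1 - int j + 1)))) (at s)"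
      unfolding S_def[abs_def] by (intro has_vector_derivative_sum has_vector_derivative_add dA)
    moreover have "(\<Sum>j<N. \<i> * complex_of_real \<alpha> * (Bf s (x + int j) - Bf s (x + int j + 1))
        + \<i> * complex_of_real \<alpha> * (Bf s (x - 1 - int j) - Bf s (x - 1 - int j + 1)))
        = \<i> * complex_of_real \<alpha> * (\<Sum>j<N. (Bf s (x + int j) - Bf s (x + int j + 1)) + (Bf s (x - 1 - int j) - Bf s (x - int j)))"
      by (simp add: sum_distrib_left algebra_simps)
    ultimately show ?thesis by (simp only: tele)
  qed
  have cb: "cmod (c y s) \<le> 1" for y s unfolding c_def \<delta>_def by (rule U_bound[OF H])
  have Bb: "cmod (Bf s y) \<le> bet Z (nat \<bar>y - 1 - x\<bar>) + bet Z (nat \<bar>y - x\<bar>)" for s y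
  proof -
    have "cmod (Bf s y) \<le> cmod (W s (y - 1)) * cmod (c y s) + cmod (W s y) * cmod (c (y - 1) s)"
      unfolding Bf_def by (metis norm_mult norm_triangle_ineq4)
    also have "\<dots> \<le> bet Z (nat \<bar>y - 1 - x\<bar>) * 1 + bet Z (nat \<bar>y - x\<bar>) * 1"
    proof -
      have bnn: "0 \<le> bet (4 * \<bar>\<alpha>\<bar> / \<bar>\<gamma>\<bar>) m" for m by (simp add: bet_def)
      show ?thesis by (intro add_mono mult_mono cb) (auto simp: W_def Z_def bnn intro: Wk_norm[OF assms(1)])
    qed
    finally show ?thesis by simp
  qed
  have Sb: "norm (\<i> * complex_of_real \<alpha> * (Bf s (x - int N) - Bf s (x + int N))) \<le> M N" if "N \<ge> 1" for s N
  proof -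
    have "norm (\<i> * complex_of_real \<alpha> * (Bf s (x - int N) - Bf s (x + int N))) \<le> \<bar>\<alpha>\<bar> * (cmod (Bf s (x - int N)) + cmod (Bf s (x + int N)))"
      by (simp add: norm_mult norm_triangle_ineq4 mult_left_mono)
    also have "\<dots> \<le> M N"
    proof -
      have e: "nat \<bar>x - int N - 1 - x\<bar> = Suc N" "nat \<bar>x - int N - x\<bar> = N"
        "nat \<bar>x + int N - 1 - x\<bar> = N - 1" "nat \<bar>x + int N - x\<bar> = N" using that by auto
      show ?thesis
        unfolding M_def using Bb[of s "x - int N"] Bb[of s "x + int N"] unfolding e
        by (intro mult_left_mono) auto
    qed
    finally show ?thesis .
  qed
  define N0 where "N0 = nat \<bar>n - x\<bar> + 1"
  have At: "A y t = (if int 0 = y - x then c x t else 0)" for y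
    by (simp add: A_def W_def Wk_zero)
  have A0: "A y 0 = (if y = n then Wk \<alpha> \<gamma> t x n else 0)" for y
  proof -
    have "c y 0 = delta n y" by (simp add: c_def \<delta>_def U_zero[OF H])
    then show ?thesis by (simp add: A_def W_def delta_def)
  qed
  have main: "norm (c x t - Wk \<alpha> \<gamma> t x n) \<le> M N * \<bar>t\<bar>" if "N \<ge> N0" for N
  proof -
    have St: "S N t = c x t"
    proof -
      have "S N t = (\<Sum>j<N. if int j = 0 then c x t else 0) + (\<Sum>j<N. if int j = - 1 then c x t else 0)"
        unfolding S_def At sum.distrib[symmetric] by (rule sum.cong) auto
      also have "\<dots> = c x t" unfolding sum_ind using that by (simp add: N0_def)
      finally show ?thesis .
    qed
    have S0: "S N 0 = Wk \<alpha> \<gamma> t x n"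
    proof -
      have "S N 0 = (\<Sum>j<N. if int j = n - x then Wk \<alpha> \<gamma> t x n else 0)
          + (\<Sum>j<N. if int j = x - 1 - n then Wk \<alpha> \<gamma> t x n else 0)"
        unfolding S_def A0 sum.distrib[symmetric] by (rule sum.cong) auto
      also have "\<dots> = Wk \<alpha> \<gamma> t x n" unfolding sum_ind using that by (auto simp: N0_def)
      finally show ?thesis .
    qed
    have "norm (S N t - S N 0) \<le> M N * \<bar>t - 0\<bar>"
      by (rule mvt_bound[OF dS Sb]) (use that in \<open>simp add: N0_def\<close>)
    then show ?thesis using St S0 by simp
  qed
  have lim: "(\<lambda>m. M (m + N0) * \<bar>t\<bar>) \<longlonglongrightarrow> 0"
  proof -
    have e: "M (m + N0) = \<bar>\<alpha>\<bar> * (bet Z (m + Suc N0) + bet Z (m + N0) + bet Z (m + (N0 - 1)) + bet Z (m + N0))" for m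
      unfolding M_def by (simp add: N0_def)
    have "(\<lambda>m. \<bar>\<alpha>\<bar> * (bet Z (m + Suc N0) + bet Z (m + N0) + bet Z (m + (N0 - 1)) + bet Z (m + N0)) * \<bar>t\<bar>)
        \<longlonglongrightarrow> \<bar>\<alpha>\<bar> * (0 + 0 + 0 + 0) * \<bar>t\<bar>"
      by (intro tendsto_intros bet_lim)
    then show ?thesis unfolding e by simp
  qed
  have "norm (c x t - Wk \<alpha> \<gamma> t x n) \<le> 0"
    by (rule LIMSEQ_le_const[OF lim]) (use main in auto)
  then have "c x t = Wk \<alpha> \<gamma> t x n" by simp
  then show ?thesis by (simp add: c_def \<delta>_def Wk_def besselJ_Jz zf_def)
qed

end
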